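(* Let $H\subseteq G$ be finite simple graphs ($H$ a subgraph of $G$). Then $\nu_*(H)\le\nu_*(G)$, and if moreover $V(H)=V(G)$, then $\nu^*(H)\le\nu^*(G)$.
   Context: For a finite simple graph $G=(V,E)$ with $\ell=|V|+|E|$, a construction sequence (c-sequence) is a bijection $x:\{1,\dots,\ell\}\to V\sqcup E$ such that every edge $e=uw$ satisfies $x^{-1}(e)>\max\{x^{-1}(u),x^{-1}(w)\}$. The cost of $x$ is $\nu(x)=\sum_{e=uw\in E}\big(2x^{-1}(e)-x^{-1}(u)-x^{-1}(w)\big)$; $\nu^*(G)$ and $\nu_*(G)$ are the maximum and minimum of $\nu(x)$ over all c-sequences for $G$. *)

theory Defs
  imports Main
begin

definition simple_graph :: "'a set \<Rightarrow> 'a set set \<Rightarrow> bool" where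
  "simple_graph V E \<longleftrightarrow> finite V \<and>
     (\<forall>e\<in>E. \<exists>u w. e = {u, w} \<and> u \<noteq> w \<and> u \<in> V \<and> w \<in> V)"

definition elems :: "'a set \<Rightarrow> 'a set set \<Rightarrow> ('a + 'a set) set" where
  "elems V E = Inl ` V \<union> Inr ` E"

definition glen :: "'a set \<Rightarrow> 'a set set \<Rightarrow> nat" where
  "glen V E = card V + card E"

definition pos :: "'a set \<Rightarrow> 'a set set \<Rightarrow> (nat \<Rightarrow> 'a + 'a set) \<Rightarrow> ('a + 'a set) \<Rightarrow> nat" where
  "pos V E x a = inv_into {1..glen V E} x a"

definition cseq :: "'a set \<Rightarrow> 'a set set \<Rightarrow> (nat \<Rightarrow> 'a + 'a set) \<Rightarrow> bool" where
  "cseq V E x \<longleftrightarrow> bij_betw x {1..glen V E} (elems V E) \<and>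
     (\<forall>e\<in>E. \<forall>v\<in>e. pos V E x (Inl v) < pos V E x (Inr e))"

definition cost :: "'a set \<Rightarrow> 'a set set \<Rightarrow> (nat \<Rightarrow> 'a + 'a set) \<Rightarrow> int" where
  "cost V E x = (\<Sum>e\<in>E. 2 * int (pos V E x (Inr e)) - (\<Sum>v\<in>e. int (pos V E x (Inl v))))"

definition nu_max :: "'a set \<Rightarrow> 'a set set \<Rightarrow> int" where
  "nu_max V E = Max (cost V E ` {x. cseq V E x})"

definition nu_min :: "'a set \<Rightarrow> 'a set set \<Rightarrow> int" where
  "nu_min V E = Min (cost V E ` {x. cseq V E x})"

end

theory Submission
  imports Defs
begin


lemma sg_facts:
  assumes "simple_graph V E"
  shows "finite V" "finite E" "\<And>e. e \<in> E \<Longrightarrow> card e = 2" "\<And>e. e \<in> E \<Longrightarrow> e \<subseteq> V"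
proof -
  show fV: "finite V" using assms by (simp add: simple_graph_def)
  have "E \<subseteq> Pow V" using assms by (auto simp: simple_graph_def)
  then show "finite E" using fV by (meson finite_Pow_iff finite_subset)
  fix e assume "e \<in> E"
  then obtain u w where "e = {u,w}" "u \<noteq> w" "u \<in> V" "w \<in> V" using assms by (auto simp: simple_graph_def)
  then show "card e = 2" "e \<subseteq> V" by auto
qed

lemma card_elems: "finite V \<Longrightarrow> finite E \<Longrightarrow> card (elems V E) = glen V E"
  unfolding elems_def glen_def
  by (subst card_Un_disjoint) (auto simp: card_image)

lemma finite_elems: "finite V \<Longrightarrow> finite E \<Longrightarrow> finite (elems V E)"
  unfolding elems_def by auto

definition rk :: "'b set \<Rightarrow> ('b \<Rightarrow> nat) \<Rightarrow> 'b \<Rightarrow> nat" where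
  "rk S f a = card {b\<in>S. f b \<le> f a}"

lemma rk_less:
  assumes "finite S" "a \<in> S" "b \<in> S" "f a < f b"
  shows "rk S f a < rk S f b"
proof -
  have "b \<notin> {c\<in>S. f c \<le> f a}" "b \<in> {c\<in>S. f c \<le> f b}" using assms by auto
  moreover have "{c\<in>S. f c \<le> f a} \<subseteq> {c\<in>S. f c \<le> f b}" using assms by auto
  ultimately have "{c\<in>S. f c \<le> f a} \<subset> {c\<in>S. f c \<le> f b}" by blast
  then show ?thesis unfolding rk_def using assms(1) by (intro psubset_card_mono) auto
qed

lemma rk_diff:
  assumes "finite S" "inj_on f S" "a \<in> S" "b \<in> S" "f b < f a"
  shows "int (rk S f a) - int (rk S f b) \<le> int (f a) - int (f b)"
proof -
  have eq: "{c\<in>S. f c \<le> f a} = {c\<in>S. f c \<le> f b} \<union> {c\<in>S. f b < f c \<and> f c \<le> f a}"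
    using assms by auto
  have "rk S f a = rk S f b + card {c\<in>S. f b < f c \<and> f c \<le> f a}"
    unfolding rk_def eq using assms(1) by (subst card_Un_disjoint) auto
  moreover have "card {c\<in>S. f b < f c \<and> f c \<le> f a} \<le> card {f b<..f a}"
    by (rule card_inj_on_le[where f=f]) (auto intro: inj_on_subset[OF assms(2)])
  ultimately show ?thesis using assms(5) by simp
qed

lemma rk_bij:
  assumes "finite S" "inj_on f S"
  shows "bij_betw (rk S f) S {1..card S}"
proof -
  have inj: "inj_on (rk S f) S"
  proof (rule inj_onI)
    fix a b assume ab: "a \<in> S" "b \<in> S" "rk S f a = rk S f b"
    show "a = b"
    proof (rule ccontr)
      assume "a \<noteq> b"
      then have "f a \<noteq> f b" using assms(2) ab by (meson inj_onD)
      then show False using rk_less[OF assms(1), of a b f] rk_less[OF assms(1), of b a f] ab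
        by (cases "f a < f b") auto
    qed
  qed
  have sub: "rk S f ` S \<subseteq> {1..card S}"
  proof
    fix k assume "k \<in> rk S f ` S"
    then obtain a where a: "a \<in> S" "k = rk S f a" by auto
    have "rk S f a \<ge> 1" unfolding rk_def using assms(1) a
      by (metis (no_types, lifting) One_nat_def Suc_leI card_gt_0_iff empty_iff finite_subset le_refl mem_Collect_eq subsetI)
    moreover have "rk S f a \<le> card S" unfolding rk_def using assms(1) by (intro card_mono) auto
    ultimately show "k \<in> {1..card S}" using a by auto
  qed
  have "card (rk S f ` S) = card {1..card S}" using inj by (simp add: card_image)
  then have "rk S f ` S = {1..card S}" using sub by (intro card_subset_eq) auto
  then show ?thesis using inj by (simp add: bij_betw_def)
qed

lemma cseq_from_rank:
  assumes sg: "simple_graph V E" and inj: "inj_on f (elems V E)"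
    and ord: "\<forall>e\<in>E. \<forall>v\<in>e. f (Inl v) < f (Inr e)"
  shows "\<exists>x. cseq V E x \<and> (\<forall>a\<in>elems V E. pos V E x a = rk (elems V E) f a)"
proof -
  let ?S = "elems V E"
  have fin: "finite ?S" using sg_facts[OF sg] finite_elems by blast
  have cS: "card ?S = glen V E" using sg_facts[OF sg] card_elems by blast
  have b: "bij_betw (rk ?S f) ?S {1..glen V E}" using rk_bij[OF fin inj] cS by simp
  define x where "x = inv_into ?S (rk ?S f)"
  have bx: "bij_betw x {1..glen V E} ?S" unfolding x_def by (rule bij_betw_inv_into[OF b])
  have p: "pos V E x a = rk ?S f a" if "a \<in> ?S" for a
    unfolding pos_def x_def by (rule inv_into_inv_into_eq[OF b that])
  have "\<forall>e\<in>E. \<forall>v\<in>e. pos V E x (Inl v) < pos V E x (Inr e)"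
  proof (intro ballI)
    fix e v assume ev: "e \<in> E" "v \<in> e"
    then have "v \<in> V" using sg_facts(4)[OF sg] by blast
    then have "Inl v \<in> ?S" "Inr e \<in> ?S" using ev by (auto simp: elems_def)
    then show "pos V E x (Inl v) < pos V E x (Inr e)"
      using p rk_less[OF fin] ord ev by metis
  qed
  then show ?thesis using bx p unfolding cseq_def by blast
qed

definition T where
  "T V E x e = (\<Sum>v\<in>e. int (pos V E x (Inr e)) - int (pos V E x (Inl v)))"

lemma cost_T: assumes "simple_graph V E" shows "cost V E x = (\<Sum>e\<in>E. T V E x e)"
  unfolding cost_def T_def
proof (rule sum.cong[OF refl])
  fix e assume "e \<in> E"
  then have "card e = 2" using sg_facts(3)[OF assms] by blast
  then show "2 * int (pos V E x (Inr e)) - (\<Sum>v\<in>e. int (pos V E x (Inl v))) =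
    (\<Sum>v\<in>e. int (pos V E x (Inr e)) - int (pos V E x (Inl v)))"
    by (simp add: sum_subtractf)
qed

lemma pos_in: "cseq V E x \<Longrightarrow> a \<in> elems V E \<Longrightarrow> pos V E x a \<in> {1..glen V E}"
  unfolding cseq_def pos_def bij_betw_def by (metis inv_into_into)

lemma T_nonneg: "cseq V E x \<Longrightarrow> e \<in> E \<Longrightarrow> T V E x e \<ge> 0"
  unfolding T_def cseq_def by (intro sum_nonneg) force

lemma T_le: assumes "cseq V E x" "simple_graph V E" "e \<in> E"
  shows "T V E x e \<le> 2 * int (glen V E)"
proof -
  have "T V E x e \<le> (\<Sum>v\<in>e. int (glen V E))" unfolding T_def
  proof (rule sum_mono)
    fix v assume "v \<in> e"
    have "Inr e \<in> elems V E" using assms(3) by (auto simp: elems_def)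
    then show "int (pos V E x (Inr e)) - int (pos V E x (Inl v)) \<le> int (glen V E)"
      using pos_in[OF assms(1)] by force
  qed
  then show ?thesis using sg_facts(3)[OF assms(2) assms(3)] by simp
qed

lemma finite_costs: assumes "simple_graph V E" shows "finite (cost V E ` {x. cseq V E x})"
proof (rule finite_subset)
  show "cost V E ` {x. cseq V E x} \<subseteq> {0 .. int (card E) * (2 * int (glen V E))}"
  proof
    fix c assume "c \<in> cost V E ` {x. cseq V E x}"
    then obtain x where x: "cseq V E x" "c = cost V E x" by auto
    have "c = (\<Sum>e\<in>E. T V E x e)" using x cost_T[OF assms] by simp
    moreover have "(\<Sum>e\<in>E. T V E x e) \<ge> 0" using T_nonneg[OF x(1)] by (simp add: sum_nonneg)
    moreover have "(\<Sum>e\<in>E. T V E x e) \<le> (\<Sum>e\<in>E. 2 * int (glen V E))"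
      using T_le[OF x(1) assms] by (intro sum_mono) auto
    ultimately show "c \<in> {0 .. int (card E) * (2 * int (glen V E))}" by simp
  qed
qed simp

lemma cseq_exists: assumes sg: "simple_graph V E" shows "\<exists>x. cseq V E x"
proof -
  obtain gV where gV: "bij_betw gV V {0..<card V}" using ex_bij_betw_finite_nat sg_facts(1)[OF sg] by blast
  obtain gE where gE: "bij_betw gE E {0..<card E}" using ex_bij_betw_finite_nat sg_facts(2)[OF sg] by blast
  have gVl: "\<And>v. v \<in> V \<Longrightarrow> gV v < card V" using bij_betw_apply[OF gV] by auto
  define f where "f a = (case a of Inl v \<Rightarrow> gV v | Inr e \<Rightarrow> card V + gE e)" for a
  have inj: "inj_on f (elems V E)"
  proof (rule inj_onI)
    fix a b assume ab: "a \<in> elems V E" "b \<in> elems V E" "f a = f b"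
    show "a = b"
    proof (cases a; cases b)
      fix v w assume "a = Inl v" "b = Inl w" then show "a = b" using ab gV
        by (auto simp: elems_def f_def bij_betw_def inj_on_def)
    next
      fix v w assume h: "a = Inl v" "b = Inr w"
      then have "v \<in> V" using ab by (auto simp: elems_def)
      then have "gV v < card V" by (rule gVl)
      then show "a = b" using ab h by (simp add: f_def)
    next
      fix v w assume h: "a = Inr v" "b = Inl w"
      then have "w \<in> V" using ab by (auto simp: elems_def)
      then have "gV w < card V" by (rule gVl)
      then show "a = b" using ab h by (simp add: f_def)
    next
      fix v w assume "a = Inr v" "b = Inr w" then show "a = b" using ab gE
        by (auto simp: elems_def f_def bij_betw_def inj_on_def)
    qed
  qed
  have "\<forall>e\<in>E. \<forall>v\<in>e. f (Inl v) < f (Inr e)"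
    using gVl sg_facts(4)[OF sg] by (auto simp: f_def) (meson subsetD trans_less_add1)
  then show ?thesis using cseq_from_rank[OF sg inj] by blast
qed

lemma pos_inj: "cseq V E x \<Longrightarrow> inj_on (pos V E x) (elems V E)"
  unfolding cseq_def pos_def bij_betw_def by (simp add: inj_on_inv_into)

lemma min_step:
  assumes sgG: "simple_graph VG EG" and sgH: "simple_graph VH EH"
    and sub: "VH \<subseteq> VG" "EH \<subseteq> EG" and x: "cseq VG EG x"
  shows "\<exists>y. cseq VH EH y \<and> cost VH EH y \<le> cost VG EG x"
proof -
  let ?f = "pos VG EG x" let ?S = "elems VH EH"
  have SS: "?S \<subseteq> elems VG EG" using sub by (auto simp: elems_def)
  have inj: "inj_on ?f ?S" using pos_inj[OF x] SS inj_on_subset by blast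
  have ord: "\<forall>e\<in>EH. \<forall>v\<in>e. ?f (Inl v) < ?f (Inr e)" using x sub unfolding cseq_def by blast
  obtain y where y: "cseq VH EH y" and py: "\<forall>a\<in>?S. pos VH EH y a = rk ?S ?f a"
    using cseq_from_rank[OF sgH inj ord] by blast
  have fin: "finite ?S" using sg_facts[OF sgH] finite_elems by blast
  have "T VH EH y e \<le> T VG EG x e" if e: "e \<in> EH" for e
    unfolding T_def
  proof (rule sum_mono)
    fix v assume v: "v \<in> e"
    then have "v \<in> VH" using sg_facts(4)[OF sgH e] by blast
    then have m: "Inl v \<in> ?S" "Inr e \<in> ?S" using e by (auto simp: elems_def)
    show "int (pos VH EH y (Inr e)) - int (pos VH EH y (Inl v)) \<le> int (?f (Inr e)) - int (?f (Inl v))"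
      using rk_diff[OF fin inj m(2) m(1)] ord e v py m by simp
  qed
  then have "cost VH EH y \<le> (\<Sum>e\<in>EH. T VG EG x e)" using cost_T[OF sgH] by (simp add: sum_mono)
  also have "\<dots> \<le> (\<Sum>e\<in>EG. T VG EG x e)"
    using sub T_nonneg[OF x] sg_facts(2)[OF sgG] by (intro sum_mono2) auto
  also have "\<dots> = cost VG EG x" using cost_T[OF sgG] by simp
  finally show ?thesis using y by blast
qed


lemma max_step:
  assumes sgG: "simple_graph V EG" and sgH: "simple_graph V EH"
    and sub: "EH \<subseteq> EG" and y: "cseq V EH y"
  shows "\<exists>x. cseq V EG x \<and> cost V EH y \<le> cost V EG x"
proof -
  let ?A = "elems V EH" let ?S = "elems V EG" let ?p = "pos V EH y" let ?L = "glen V EH"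
  obtain gE where gE: "bij_betw gE (EG - EH) {0..<card (EG - EH)}"
    using ex_bij_betw_finite_nat sg_facts(2)[OF sgG] by blast
  define f where "f a = (if a \<in> ?A then ?p a else ?L + 1 + gE (projr a))" for a
  have AS: "?A \<subseteq> ?S" using sub by (auto simp: elems_def)
  have pA: "\<And>a. a \<in> ?A \<Longrightarrow> ?p a \<in> {1..?L}" using pos_in[OF y] by blast
  have pinj: "inj_on ?p ?A" using pos_inj[OF y] .
  have extra: "\<And>a. a \<in> ?S \<Longrightarrow> a \<notin> ?A \<Longrightarrow> \<exists>e. a = Inr e \<and> e \<in> EG - EH"
    by (auto simp: elems_def)
  have inj: "inj_on f ?S"
  proof (rule inj_onI)
    fix a b assume ab: "a \<in> ?S" "b \<in> ?S" "f a = f b"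
    show "a = b"
    proof (cases "a \<in> ?A"; cases "b \<in> ?A")
      assume h: "a \<in> ?A" "b \<in> ?A"
      then have "?p a = ?p b" using ab(3) unfolding f_def by simp
      then show ?thesis using inj_onD[OF pinj _ h(1) h(2)] by blast
    next
      assume h: "a \<in> ?A" "b \<notin> ?A"
      then have "?p a \<le> ?L" using pA by auto
      moreover have "f a = ?p a" "f b = ?L + 1 + gE (projr b)" using h unfolding f_def by simp_all
      ultimately show ?thesis using ab(3) by simp
    next
      assume h: "a \<notin> ?A" "b \<in> ?A"
      then have "?p b \<le> ?L" using pA by auto
      moreover have "f b = ?p b" "f a = ?L + 1 + gE (projr a)" using h unfolding f_def by simp_all
      ultimately show ?thesis using ab(3) by simp
    next
      assume h: "a \<notin> ?A" "b \<notin> ?A"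
      obtain e1 where e1: "a = Inr e1" "e1 \<in> EG - EH" using extra[OF ab(1) h(1)] by blast
      obtain e2 where e2: "b = Inr e2" "e2 \<in> EG - EH" using extra[OF ab(2) h(2)] by blast
      note e = e1 e2
      have fa: "f a = ?L + 1 + gE (projr a)" "f b = ?L + 1 + gE (projr b)" using h unfolding f_def by simp_all
      have "gE (projr a) = gE (projr b)" using ab(3) fa by linarith
      then have "gE e1 = gE e2" using e(1,3) by simp
      have "inj_on gE (EG - EH)" using gE unfolding bij_betw_def by blast
      from inj_onD[OF this \<open>gE e1 = gE e2\<close> e(2) e(4)] have "e1 = e2" .
      then show ?thesis using e by simp
    qed
  qed
  have ord: "\<forall>e\<in>EG. \<forall>v\<in>e. f (Inl v) < f (Inr e)"
  proof (intro ballI)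
    fix e v assume ev: "e \<in> EG" "v \<in> e"
    then have "v \<in> V" using sg_facts(4)[OF sgG] by blast
    then have iv: "Inl v \<in> ?A" by (auto simp: elems_def)
    show "f (Inl v) < f (Inr e)"
    proof (cases "e \<in> EH")
      case True
      then have "Inr e \<in> ?A" by (auto simp: elems_def)
      moreover have "?p (Inl v) < ?p (Inr e)" using y ev True unfolding cseq_def by blast
      ultimately show ?thesis using iv by (simp add: f_def)
    next
      case False
      then have "Inr e \<notin> ?A" by (auto simp: elems_def)
      moreover have "?p (Inl v) \<le> ?L" using pA iv by auto
      ultimately show ?thesis using iv by (simp add: f_def)
    qed
  qed
  obtain x where x: "cseq V EG x" and px: "\<forall>a\<in>?S. pos V EG x a = rk ?S f a"
    using cseq_from_rank[OF sgG inj ord] by blast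
  have rkA: "rk ?S f a = ?p a" if a: "a \<in> ?A" for a
  proof -
    have pa: "?p a \<le> ?L" using pA a by auto
    have "{b\<in>?S. f b \<le> f a} = {b\<in>?A. ?p b \<le> ?p a}"
    proof
      show "{b\<in>?S. f b \<le> f a} \<subseteq> {b\<in>?A. ?p b \<le> ?p a}"
      proof
        fix b assume "b \<in> {b\<in>?S. f b \<le> f a}"
        then show "b \<in> {b\<in>?A. ?p b \<le> ?p a}" using a pa by (cases "b \<in> ?A") (auto simp: f_def)
      qed
    next
      show "{b\<in>?A. ?p b \<le> ?p a} \<subseteq> {b\<in>?S. f b \<le> f a}" using AS a unfolding f_def by auto
    qed
    also have "?p ` {b\<in>?A. ?p b \<le> ?p a} = {1..?p a}"
    proof -
      have "bij_betw y {1..?L} ?A" using y unfolding cseq_def by blast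
      from bij_betw_inv_into[OF this] have im: "?p ` ?A = {1..?L}"
        unfolding pos_def bij_betw_def by blast
      show ?thesis
      proof
        show "?p ` {b\<in>?A. ?p b \<le> ?p a} \<subseteq> {1..?p a}" using pA by auto
        show "{1..?p a} \<subseteq> ?p ` {b\<in>?A. ?p b \<le> ?p a}"
        proof
          fix k assume k: "k \<in> {1..?p a}"
          then have "k \<in> ?p ` ?A" using im pa by auto
          then obtain b where "b \<in> ?A" "k = ?p b" by auto
          then show "k \<in> ?p ` {b\<in>?A. ?p b \<le> ?p a}" using k by auto
        qed
      qed
    qed
    then have "card {b\<in>?A. ?p b \<le> ?p a} = ?p a"
      using card_image[OF inj_on_subset[OF pinj, of "{b\<in>?A. ?p b \<le> ?p a}"]] by auto
    finally show ?thesis unfolding rk_def .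
  qed
  have "T V EG x e = T V EH y e" if e: "e \<in> EH" for e
    unfolding T_def
  proof (rule sum.cong[OF refl])
    fix v assume v: "v \<in> e"
    then have "v \<in> V" using sg_facts(4)[OF sgH e] by blast
    then have m: "Inl v \<in> ?A" "Inr e \<in> ?A" using e by (auto simp: elems_def)
    then show "int (pos V EG x (Inr e)) - int (pos V EG x (Inl v)) = int (?p (Inr e)) - int (?p (Inl v))"
    proof -
      have "pos V EG x (Inr e) = ?p (Inr e)" "pos V EG x (Inl v) = ?p (Inl v)"
        using px rkA AS m by (metis subsetD)+
      then show ?thesis by simp
    qed
  qed
  then have "cost V EH y = (\<Sum>e\<in>EH. T V EG x e)" using cost_T[OF sgH] by simp
  also have "\<dots> \<le> (\<Sum>e\<in>EG. T V EG x e)"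
    using sub T_nonneg[OF x] sg_facts(2)[OF sgG] by (intro sum_mono2) auto
  also have "\<dots> = cost V EG x" using cost_T[OF sgG] by simp
  finally show ?thesis using x by blast
qed

theorem lemma6:
  fixes VG VH :: "'a set" and EG EH :: "'a set set"
  assumes "simple_graph VG EG" and "simple_graph VH EH"
    and "VH \<subseteq> VG" and "EH \<subseteq> EG"
  shows "nu_min VH EH \<le> nu_min VG EG \<and> (VH = VG \<longrightarrow> nu_max VH EH \<le> nu_max VG EG)"
proof
  let ?SG = "cost VG EG ` {x. cseq VG EG x}" let ?SH = "cost VH EH ` {x. cseq VH EH x}"
  have fG: "finite ?SG" "?SG \<noteq> {}" using finite_costs[OF assms(1)] cseq_exists[OF assms(1)] by auto
  have fH: "finite ?SH" "?SH \<noteq> {}" using finite_costs[OF assms(2)] cseq_exists[OF assms(2)] by auto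
  show "nu_min VH EH \<le> nu_min VG EG"
  proof -
    have "Min ?SG \<in> ?SG" using fG by (rule Min_in)
    then obtain x where x: "cseq VG EG x" "Min ?SG = cost VG EG x" by auto
    obtain y where y: "cseq VH EH y" "cost VH EH y \<le> cost VG EG x"
      using min_step[OF assms x(1)] by blast
    have "Min ?SH \<le> cost VH EH y" using fH(1) y(1) by (intro Min_le) auto
    then show ?thesis unfolding nu_min_def using x y by simp
  qed
  show "VH = VG \<longrightarrow> nu_max VH EH \<le> nu_max VG EG"
  proof
    assume eq: "VH = VG"
    have "Max ?SH \<in> ?SH" using fH by (rule Max_in)
    then obtain y where y: "cseq VH EH y" "Max ?SH = cost VH EH y" by auto
    obtain x where x: "cseq VG EG x" "cost VH EH y \<le> cost VG EG x"
      using max_step[of VG EG EH y] assms y(1) eq by auto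
    have "cost VG EG x \<le> Max ?SG" using fG(1) x(1) by (intro Max_ge) auto
    then show "nu_max VH EH \<le> nu_max VG EG" unfolding nu_max_def using x y by simp
  qed
qed

end
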